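(* Fix $\delta>0$. There is a constant $C$, independent of $t$ and $q$, such that for all $t\in[d/2+\delta,1/\delta]$ and $q\ge1$, $$(2t-d)g_1(q)-Cg_2(q)+\log\det K(t,0)\le\log\det K(t,q)\le(2t-d)g_1(q)+Cg_2(q)+\log\det K(t,0),$$ where $g_1(q)=\sum_{k=1}^q(2^{kd}-2^{(k-1)d})(-k\log2)$ and $g_2(q)=(2^{qd}-1)(2t-d)$. Moreover $-g_1(q)\simeq q2^{qd}$.
   Context: $\phi_m(x)=e^{2\pi i\langle m,x\rangle}$ on $\mathbb T^d=[0,1]^d$ (periodic). For $t>d/2$, $K_t(x,y)=\sum_{m\in\mathbb Z^d\setminus\{0\}}(4\pi^2|m|^2)^{-t}\phi_m(x)\overline{\phi_m(y)}$. For $q\ge0$, $J_q=\{0,\dots,2^q-1\}^d$, $x_j=j2^{-q}$, and $K(t,q)$ is the $2^{qd}\times2^{qd}$ Gram matrix $(K_t(x_i,x_j))_{i,j\in J_q}$; in particular $K(t,0)$ is the $1\times1$ matrix $[K_t(0,0)]$. $A\simeq B$ means $C^{-1}B\le A\le CB$ for a constant depending only on $d$ (and $\delta$). *)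

theory Defs
  imports "HOL-Analysis.Analysis"
begin

text \<open>Torus dimension d = CARD('d). Frequencies m are integer vectors int^'d,
points are real vectors real^'d.\<close>

definition ip :: "int ^ 'd \<Rightarrow> real ^ 'd \<Rightarrow> real" where
  "ip m x = (\<Sum>i\<in>UNIV. real_of_int (m $ i) * x $ i)"

definition sqnorm :: "int ^ 'd \<Rightarrow> real" where
  "sqnorm m = (\<Sum>i\<in>UNIV. (real_of_int (m $ i))^2)"

definition phi :: "int ^ 'd \<Rightarrow> real ^ 'd \<Rightarrow> complex" where
  "phi m x = exp (2 * complex_of_real pi * \<i> * complex_of_real (ip m x))"

definition Kt :: "real \<Rightarrow> real ^ 'd \<Rightarrow> real ^ 'd \<Rightarrow> complex" where
  "Kt t x y = infsum (\<lambda>m::int ^ 'd. complex_of_real ((4 * pi^2 * sqnorm m) powr (-t))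
                 * phi m x * cnj (phi m y)) (UNIV - {0})"

definition Jq :: "nat \<Rightarrow> (int ^ 'd) set" where
  "Jq q = {j. \<forall>i. 0 \<le> j $ i \<and> j $ i < 2 ^ q}"

definition gridpt :: "nat \<Rightarrow> int ^ 'd \<Rightarrow> real ^ 'd" where
  "gridpt q j = (\<chi> i. real_of_int (j $ i) / 2 ^ q)"

definition gram :: "real \<Rightarrow> nat \<Rightarrow> int ^ 'd \<Rightarrow> int ^ 'd \<Rightarrow> complex" where
  "gram t q i j = Kt t (gridpt q i) (gridpt q j)"

definition det_on :: "'a set \<Rightarrow> ('a \<Rightarrow> 'a \<Rightarrow> complex) \<Rightarrow> complex" where
  "det_on J M = (\<Sum>p\<in>{p. p permutes J}. of_int (sign p) * (\<Prod>i\<in>J. M i (p i)))"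

text \<open>log det K(t,q). The determinant is real (positive), we take the log of its real part.\<close>
definition logdetK :: "'d::finite itself \<Rightarrow> real \<Rightarrow> nat \<Rightarrow> real" where
  "logdetK _ t q = ln (Re (det_on (Jq q :: (int ^ 'd) set) (gram t q)))"

definition g1 :: "nat \<Rightarrow> nat \<Rightarrow> real" where
  "g1 d q = (\<Sum>k=1..q. (2 ^ (k*d) - 2 ^ ((k-1)*d)) * (- real k * ln 2))"

definition g2 :: "nat \<Rightarrow> real \<Rightarrow> nat \<Rightarrow> real" where
  "g2 d t q = (2 ^ (q*d) - 1) * (2*t - real d)"

end

theory Submission
  imports Defs "Jordan_Normal_Form.Determinant"
begin

no_notation Matrix.vec_index (infixl "$" 100)


lemma det_on_transfer:
  fixes M :: "'a \<Rightarrow> 'a \<Rightarrow> complex"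
  assumes e: "bij_betw e {0..<n} J"
  shows "det_on J M = det (mat n n (\<lambda>(a,b). M (e a) (e b)))"
proof -
  let ?A = "{0..<n}"
  let ?F = "\<lambda>\<pi> x. if x \<in> J then e (\<pi> (inv_into ?A e x)) else x"
  have bij: "bij_betw ?F {\<pi>. \<pi> permutes ?A} {\<pi>. \<pi> permutes J}"
    by (rule bij_betw_permutations[OF e])
  have fin: "finite J" using e bij_betw_finite by blast
  have "det (mat n n (\<lambda>(a,b). M (e a) (e b))) =
      (\<Sum>p\<in>{p. p permutes ?A}. of_int (sign p) * (\<Prod>i\<in>?A. M (e i) (e (p i))))"
    by (subst det_def'[of _ n]) (auto intro!: sum.cong prod.cong)
  also have "\<dots> = (\<Sum>p\<in>{p. p permutes ?A}. of_int (sign (?F p)) * (\<Prod>x\<in>J. M x (?F p x)))"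
  proof (rule sum.cong[OF refl])
    fix p assume p: "p \<in> {p. p permutes ?A}"
    interpret pb: permutes_bij_finite p ?A J e "inv_into ?A e" "?F p"
      apply unfold_locales
      using p e by (auto simp: bij_betw_inv_into_left)
    have s: "sign (?F p) = sign p" by (rule pb.sign_p')
    have "(\<Prod>x\<in>J. M x (?F p x)) = (\<Prod>i\<in>?A. M (e i) (?F p (e i)))"
      by (rule prod.reindex_bij_betw[OF e, symmetric])
    also have "\<dots> = (\<Prod>i\<in>?A. M (e i) (e (p i)))"
    proof (rule prod.cong[OF refl])
      fix i assume i: "i \<in> ?A"
      have "e i \<in> J" using i e by (auto simp: bij_betw_def)
      moreover have "inv_into ?A e (e i) = i" using i e by (simp add: bij_betw_inv_into_left)
      ultimately show "M (e i) (?F p (e i)) = M (e i) (e (p i))" by simp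
    qed
    finally show "of_int (sign p) * (\<Prod>i\<in>?A. M (e i) (e (p i))) =
       of_int (sign (?F p)) * (\<Prod>x\<in>J. M x (?F p x))" using s by simp
  qed
  also have "\<dots> = det_on J M"
    unfolding det_on_def
    by (rule sum.reindex_bij_betw[OF bij, of "\<lambda>\<pi>. of_int (sign \<pi>) * (\<Prod>x\<in>J. M x (\<pi> x))"])
  finally show ?thesis by simp
qed

lemma det_on_factor:
  fixes M :: "'a \<Rightarrow> 'a \<Rightarrow> complex"
  assumes fin: "finite J"
    and M: "\<And>x y. x \<in> J \<Longrightarrow> y \<in> J \<Longrightarrow> M x y = (\<Sum>k\<in>J. w x k * mu k * v k y)"
    and orth: "\<And>k l. k \<in> J \<Longrightarrow> l \<in> J \<Longrightarrow> (\<Sum>y\<in>J. v k y * w y l) = (if k = l then c else 0)"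
  shows "det_on J M = c ^ card J * (\<Prod>k\<in>J. mu k)"
proof -
  define n where "n = card J"
  obtain e where e: "bij_betw e {0..<n} J" using ex_bij_betw_nat_finite[OF fin] n_def by blast
  have eJ: "a < n \<Longrightarrow> e a \<in> J" for a using e by (auto simp: bij_betw_def)
  define W where "W = mat n n (\<lambda>(a,b). w (e a) (e b))"
  define V where "V = mat n n (\<lambda>(a,b). v (e a) (e b))"
  define D where "D = mat n n (\<lambda>(a,b). if a = b then mu (e a) else 0)"
  have W: "W \<in> carrier_mat n n" and V: "V \<in> carrier_mat n n" and D: "D \<in> carrier_mat n n"
    by (auto simp: W_def V_def D_def)
  have sumJ: "(\<Sum>k\<in>J. f k) = (\<Sum>a<n. f (e a))" for f :: "'a \<Rightarrow> complex"
    using sum.reindex_bij_betw[OF e, of f] by (simp add: atLeast0LessThan)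
  define WD where "WD = mat n n (\<lambda>(a,b). w (e a) (e b) * mu (e b))"
  have WDc: "WD \<in> carrier_mat n n" by (simp add: WD_def)
  have WDe: "W * D = WD"
  proof (rule eq_matI)
    fix a b assume "a < dim_row WD" "b < dim_col WD"
    hence a: "a < n" and b: "b < n" by (auto simp: WD_def)
    have "(W * D) $$ (a, b) = (\<Sum>i<n. w (e a) (e i) * (if i = b then mu (e i) else 0))"
      using a b W D by (simp add: W_def D_def scalar_prod_def atLeast0LessThan)
    also have "\<dots> = w (e a) (e b) * mu (e b)"
      using b by (simp add: if_distrib[of "\<lambda>x. _ * x"] sum.If_cases)
    finally show "(W * D) $$ (a, b) = WD $$ (a, b)" using a b by (simp add: WD_def)
  qed (use W D in \<open>auto simp: WD_def\<close>)
  have MWDV: "mat n n (\<lambda>(a,b). M (e a) (e b)) = WD * V"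
  proof (rule eq_matI)
    fix a b assume ab: "a < dim_row (WD * V)" "b < dim_col (WD * V)"
    hence a: "a < n" and b: "b < n" using WDc V by auto
    have "(WD * V) $$ (a, b) = (\<Sum>i<n. w (e a) (e i) * mu (e i) * v (e i) (e b))"
      using a b WDc V by (simp add: scalar_prod_def atLeast0LessThan WD_def V_def)
    also have "\<dots> = M (e a) (e b)" using M[OF eJ[OF a] eJ[OF b]] sumJ by simp
    finally show "mat n n (\<lambda>(a,b). M (e a) (e b)) $$ (a, b) = (WD * V) $$ (a, b)"
      using a b by simp
  qed (use WDc V in auto)
  have VW: "V * W = c \<cdot>\<^sub>m 1\<^sub>m n"
  proof (rule eq_matI)
    fix a b assume ab: "a < dim_row (c \<cdot>\<^sub>m 1\<^sub>m n)" "b < dim_col (c \<cdot>\<^sub>m 1\<^sub>m n)"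
    hence a: "a < n" and b: "b < n" by auto
    have "(V * W) $$ (a, b) = (\<Sum>i<n. v (e a) (e i) * w (e i) (e b))"
      using a b W V by (simp add: scalar_prod_def atLeast0LessThan V_def W_def)
    also have "\<dots> = (if e a = e b then c else 0)"
      using orth[OF eJ[OF a] eJ[OF b]] sumJ by simp
    also have "\<dots> = (c \<cdot>\<^sub>m 1\<^sub>m n) $$ (a, b)"
      using a b e by (auto simp: bij_betw_def inj_on_def)
    finally show "(V * W) $$ (a, b) = (c \<cdot>\<^sub>m 1\<^sub>m n) $$ (a, b)" .
  qed (use W V in auto)
  have detD: "det D = (\<Prod>k\<in>J. mu k)"
  proof -
    have "det D = prod_list (diag_mat D)"
      by (rule det_upper_triangular[OF _ D]) (auto simp: upper_triangular_def D_def)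
    also have "\<dots> = (\<Prod>a=0..<n. mu (e a))"
      unfolding prod_list_diag_prod using D by (auto simp: D_def intro!: prod.cong)
    also have "\<dots> = (\<Prod>k\<in>J. mu k)"
      using prod.reindex_bij_betw[OF e, of mu] by simp
    finally show ?thesis .
  qed
  have "det_on J M = det (W * D * V)"
    using det_on_transfer[OF e] MWDV WDe by simp
  also have "\<dots> = det W * det D * det V"
    using W D V by (simp add: det_mult[of _ n] mult_carrier_mat[of _ n n])
  also have "\<dots> = det D * (det V * det W)" by (simp add: ac_simps)
  also have "det V * det W = c ^ n"
    using det_mult[OF V W, symmetric] VW by simp
  finally show ?thesis using detD n_def by (simp add: ac_simps)
qed


definition Pset :: "'a set \<Rightarrow> ('a ^ 'n) set" where
  "Pset A = {v. \<forall>c. v $ c \<in> A}"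

lemma bij_Pset: "bij_betw (\<lambda>g. \<chi> c. g c) (PiE UNIV (\<lambda>_. A)) (Pset A :: ('a^'n::finite) set)"
  by (rule bij_betwI[of _ _ _ vec_nth]) (auto simp: Pset_def vec_eq_iff)

lemma finite_Pset: "finite A \<Longrightarrow> finite (Pset A :: ('a^'n::finite) set)"
proof -
  assume "finite A"
  hence "finite (PiE (UNIV::'n set) (\<lambda>_. A))" by (simp add: finite_PiE)
  thus ?thesis using bij_betw_finite[OF bij_Pset[where A=A and 'n='n]] by simp
qed

lemma card_Pset: "finite A \<Longrightarrow> card (Pset A :: ('a^'n::finite) set) = card A ^ CARD('n)"
  using bij_betw_same_card[OF bij_Pset[where A=A and 'n='n]] by (simp add: card_PiE)

lemma sum_Pset_prod:
  fixes f :: "'n::finite \<Rightarrow> 'a \<Rightarrow> 'b::comm_semiring_1"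
  assumes "finite A"
  shows "(\<Sum>v\<in>(Pset A :: ('a^'n) set). \<Prod>c\<in>UNIV. f c (v $ c)) = (\<Prod>c\<in>UNIV. \<Sum>a\<in>A. f c a)"
proof -
  have "(\<Sum>v\<in>(Pset A :: ('a^'n) set). \<Prod>c\<in>UNIV. f c (v $ c)) =
        (\<Sum>g\<in>PiE UNIV (\<lambda>_. A). \<Prod>c\<in>UNIV. f c ((\<chi> c. g c) $ c))"
    by (rule sum.reindex_bij_betw[OF bij_Pset, symmetric])
  also have "\<dots> = (\<Sum>g\<in>PiE UNIV (\<lambda>_. A). \<Prod>c\<in>UNIV. f c (g c))" by simp
  also have "\<dots> = (\<Prod>c\<in>UNIV. \<Sum>a\<in>A. f c a)"
    by (rule prod_sum_PiE[symmetric]) (use assms in auto)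
  finally show ?thesis .
qed

lemma Jq_Pset: "Jq q = Pset {0..<(2::int)^q}"
  by (auto simp: Jq_def Pset_def)

lemma finite_Jq: "finite (Jq q :: (int^'d::finite) set)"
  by (simp add: Jq_Pset finite_Pset)

lemma card_Jq: "card (Jq q :: (int^'d::finite) set) = 2 ^ (q * CARD('d))"
  by (simp add: Jq_Pset card_Pset power_mult nat_power_eq)

lemma zero_Jq: "0 \<in> Jq q"
  by (auto simp: Jq_def)

definition cen :: "nat \<Rightarrow> int \<Rightarrow> int" where
  "cen q a = (if 2 * a \<le> 2 ^ q then a else a - 2 ^ q)"

definition inb :: "nat \<Rightarrow> int \<Rightarrow> bool" where
  "inb j x \<longleftrightarrow> - (2 ^ j) < 2 * x \<and> 2 * x \<le> 2 ^ j"

lemma inb_mono: "inb j x \<Longrightarrow> j \<le> j' \<Longrightarrow> inb j' x"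
proof -
  assume a: "inb j x" "j \<le> j'"
  have "(2::int) ^ j \<le> 2 ^ j'" using a(2) by (simp add: power_increasing)
  thus ?thesis using a(1) unfolding inb_def by linarith
qed

lemma cen_range: "0 \<le> a \<Longrightarrow> a < 2 ^ q \<Longrightarrow> inb q (cen q a)"
  by (auto simp: inb_def cen_def)

lemma cen_mod: "(cen q a - a) mod 2 ^ q = 0"
  by (auto simp: cen_def)

lemma cen_zero_iff: "0 \<le> a \<Longrightarrow> a < 2 ^ q \<Longrightarrow> cen q a = 0 \<longleftrightarrow> a = 0"
  by (auto simp: cen_def)

lemma card_inb: "card {x::int. inb j x} = 2 ^ j"
proof -
  define P where "P = (2::int) ^ j"
  define h where "h = P div 2"
  have "P = 1 \<or> P = 2 * h"
    by (cases j) (auto simp: P_def h_def)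
  hence "{x::int. inb j x} = {h - P + 1 .. h}"
    unfolding inb_def P_def[symmetric] by (auto simp: h_def)
  hence "card {x::int. inb j x} = nat P" by (simp add: card_atLeastAtMost_int)
  thus ?thesis by (simp add: P_def nat_power_eq)
qed

lemma card_inb_cen:
  assumes "j \<le> q"
  shows "card {a\<in>{0..<(2::int)^q}. inb j (cen q a)} = 2 ^ j"
proof -
  let ?M = "(2::int)^q"
  have jq: "(2::int) ^ j \<le> ?M" using assms by (simp add: power_increasing)
  have inj: "inj_on (cen q) {a\<in>{0..<?M}. inb j (cen q a)}"
    by (auto simp: inj_on_def cen_def split: if_splits)
  have img: "cen q ` {a\<in>{0..<?M}. inb j (cen q a)} = {x. inb j x}"
  proof (intro equalityI subsetI)
    fix x assume "x \<in> cen q ` {a\<in>{0..<?M}. inb j (cen q a)}"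
    thus "x \<in> {x. inb j x}" by auto
  next
    fix x assume "x \<in> {x. inb j x}"
    hence x: "inb j x" by simp
    define P where "P = (2::int)^j"
    have PQ: "P \<le> ?M" using jq P_def by simp
    have xP: "- P < 2 * x" "2 * x \<le> P" using x by (auto simp: inb_def P_def)
    define a where "a = (if 0 \<le> x then x else x + ?M)"
    have "a \<in> {0..<?M}" "cen q a = x"
      using xP PQ by (auto simp: a_def cen_def)
    thus "x \<in> cen q ` {a\<in>{0..<?M}. inb j (cen q a)}" using x by force
  qed
  show ?thesis using card_image[OF inj] img card_inb by simp
qed

lemma card_levset:
  assumes "j \<le> q"
  shows "card {k\<in>(Jq q :: (int^'d::finite) set). \<forall>c. inb j (cen q (k $ c))} = 2 ^ (j * CARD('d))"
proof -
  have "{k\<in>(Jq q :: (int^'d::finite) set). \<forall>c. inb j (cen q (k $ c))} =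
        Pset {a\<in>{0..<(2::int)^q}. inb j (cen q a)}"
    by (auto simp: Jq_def Pset_def)
  moreover have "card (Pset {a\<in>{0..<(2::int)^q}. inb j (cen q a)} :: (int^'d) set)
      = card {a\<in>{0..<(2::int)^q}. inb j (cen q a)} ^ CARD('d)"
    by (rule card_Pset) (rule finite_subset[of _ "{0..<2^q}"], auto)
  ultimately show ?thesis using card_inb_cen[OF assms]
    by (simp add: power_mult)
qed

definition lev :: "nat \<Rightarrow> int^'d \<Rightarrow> nat" where
  "lev q k = card {j\<in>{..<q}. \<not> (\<forall>c. inb j (cen q (k $ c)))}"

lemma sum_lev:
  "(\<Sum>k\<in>(Jq q :: (int^'d::finite) set). real (lev q k)) =
     real q * 2 ^ (q * CARD('d)) - (\<Sum>j<q. 2 ^ (j * CARD('d)))"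
proof -
  let ?J = "Jq q :: (int^'d::finite) set"
  let ?P = "\<lambda>k j. \<forall>c. inb j (cen q (k $ c))"
  have levs: "(\<Sum>j<q. if ?P k j then 0 else 1::real) = real (lev q k)" for k
  proof -
    have "(\<Sum>j<q. if ?P k j then 0 else 1::real) = (\<Sum>j\<in>{j\<in>{..<q}. \<not> ?P k j}. 1)"
      by (subst sum.inter_filter) (auto intro: sum.cong)
    thus ?thesis by (simp add: lev_def)
  qed
  have "(\<Sum>k\<in>?J. real (lev q k)) = (\<Sum>k\<in>?J. \<Sum>j<q. if ?P k j then 0 else 1)"
    by (simp add: levs)
  also have "\<dots> = (\<Sum>j<q. \<Sum>k\<in>?J. if ?P k j then 0 else 1)"
    by (rule sum.swap)
  also have "\<dots> = (\<Sum>j<q. real (card ?J) - real (card {k\<in>?J. ?P k j}))"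
  proof (rule sum.cong[OF refl])
    fix j
    have "(\<Sum>k\<in>?J. if ?P k j then 0 else 1 :: real) = (\<Sum>k\<in>{k\<in>?J. \<not> ?P k j}. 1)"
      by (subst sum.inter_filter) (auto simp: finite_Jq intro: sum.cong)
    also have "\<dots> = real (card {k\<in>?J. \<not> ?P k j})" by simp
    also have "{k\<in>?J. \<not> ?P k j} = ?J - {k\<in>?J. ?P k j}" by auto
    also have "real (card \<dots>) = real (card ?J) - real (card {k\<in>?J. ?P k j})"
      by (subst card_Diff_subset) (auto simp: finite_Jq intro!: of_nat_diff card_mono)
    finally show "(\<Sum>k\<in>?J. if ?P k j then 0 else 1 :: real) = \<dots>" .
  qed
  also have "\<dots> = (\<Sum>j<q. 2 ^ (q * CARD('d)) - 2 ^ (j * CARD('d)))"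
    by (intro sum.cong refl) (simp add: card_Jq card_levset)
  also have "\<dots> = real q * 2 ^ (q * CARD('d)) - (\<Sum>j<q. 2 ^ (j * CARD('d)))"
    by (simp add: sum_subtractf)
  finally show ?thesis .
qed

lemma g1_alt: "g1 d q = - ln 2 * (real q * 2 ^ (q * d) - (\<Sum>j<q. 2 ^ (j * d)))"
proof (induction q)
  case 0 thus ?case by (simp add: g1_def)
next
  case (Suc q)
  have "g1 d (Suc q) = g1 d q + (2 ^ (Suc q * d) - 2 ^ (q * d)) * (- real (Suc q) * ln 2)"
    unfolding g1_def by (subst sum.cl_ivl_Suc) (simp del: of_nat_Suc)
  also have "\<dots> = - ln 2 * (real q * 2 ^ (q * d) - (\<Sum>j<q. 2 ^ (j * d)))
     + (2 ^ (Suc q * d) - 2 ^ (q * d)) * (- real (Suc q) * ln 2)" using Suc by simp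
  also have "\<dots> = - ln 2 * (real (Suc q) * 2 ^ (Suc q * d) - (\<Sum>j<Suc q. 2 ^ (j * d)))"
    by (simp del: of_nat_Suc add: algebra_simps) (simp add: algebra_simps)
  finally show ?case .
qed

lemma geo_le: "d \<ge> 1 \<Longrightarrow> (\<Sum>j<q. (2::real) ^ (j * d)) \<le> 2 ^ (q * d) - 1"
proof (induction q)
  case 0 thus ?case by simp
next
  case (Suc q)
  have "(2::real) ^ (Suc q * d) = 2 ^ d * 2 ^ (q * d)" by (simp add: power_add)
  moreover have "(2::real) ^ d \<ge> 2" using Suc.prems
    by (metis power_increasing power_one_right one_le_numeral)
  moreover have "(0::real) \<le> 2 ^ (q * d)" by simp
  ultimately have "2 * 2 ^ (q * d) \<le> (2::real) ^ (Suc q * d)"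
    by (metis mult_right_mono)
  thus ?case using Suc by simp
qed

lemma q_le: "d \<ge> 1 \<Longrightarrow> real q \<le> 2 ^ (q * d) - 1"
proof -
  assume "d \<ge> 1"
  have "real q + 1 \<le> 2 ^ q"
  proof (induction q)
    case (Suc q) thus ?case by simp
  qed simp
  moreover have "(2::real) ^ q \<le> 2 ^ (q * d)" using \<open>d \<ge> 1\<close> by (intro power_increasing) auto
  ultimately show ?thesis by linarith
qed

lemma lev_props:
  fixes k :: "int^'d::finite"
  assumes k: "k \<in> Jq q" "k \<noteq> 0"
  shows "lev q k \<ge> 1" "\<forall>c. inb (lev q k) (cen q (k $ c))"
        "\<exists>c. \<not> inb (lev q k - 1) (cen q (k $ c))"
proof -
  let ?P = "\<lambda>j. \<forall>c. inb j (cen q (k $ c))"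
  have Pq: "?P q" using k by (auto simp: Jq_def intro: cen_range)
  have mono: "?P j \<Longrightarrow> j \<le> j' \<Longrightarrow> ?P j'" for j j' using inb_mono by blast
  define j0 where "j0 = (LEAST j. ?P j)"
  have Pj0: "?P j0" unfolding j0_def by (rule LeastI[of _ q], rule Pq)
  have j0q: "j0 \<le> q" unfolding j0_def by (rule Least_le, rule Pq)
  have nP: "j < j0 \<Longrightarrow> \<not> ?P j" for j unfolding j0_def using not_less_Least by blast
  have "{j\<in>{..<q}. \<not> ?P j} = {..<j0}"
    using nP mono[OF Pj0] j0q by (auto simp: not_less) (meson le_trans not_le)
  hence levj0: "lev q k = j0" by (simp add: lev_def)
  have "j0 \<noteq> 0"
  proof
    assume "j0 = 0"
    hence h: "\<forall>c. - 1 < 2 * cen q (k $ c) \<and> 2 * cen q (k $ c) \<le> 1" using Pj0 by (simp add: inb_def)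
    have "\<forall>c. cen q (k $ c) = 0"
    proof
      fix c show "cen q (k $ c) = 0" using h[rule_format, of c] by presburger
    qed
    hence "\<forall>c. k $ c = 0" using k(1) cen_zero_iff by (auto simp: Jq_def)
    thus False using k(2) by (metis Finite_Cartesian_Product.vec_eq_iff zero_index)
  qed
  thus "lev q k \<ge> 1" using levj0 by simp
  show "\<forall>c. inb (lev q k) (cen q (k $ c))" using Pj0 levj0 by simp
  show "\<exists>c. \<not> inb (lev q k - 1) (cen q (k $ c))" using nP[of "j0 - 1"] \<open>j0 \<noteq> 0\<close> levj0 by simp
qed


lemma sqnorm_nonneg: "sqnorm m \<ge> 0"
  by (simp add: sqnorm_def sum_nonneg)

lemma sqnorm_ge1:
  fixes m :: "int^'d::finite"
  assumes "m \<noteq> 0" shows "sqnorm m \<ge> 1"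
proof -
  obtain c where c: "m $ c \<noteq> 0" using assms by (metis Finite_Cartesian_Product.vec_eq_iff zero_index)
  have "1 \<le> (real_of_int (m $ c))^2"
  proof -
    have "1 \<le> \<bar>m $ c\<bar>" using c by linarith
    hence "1 \<le> \<bar>real_of_int (m $ c)\<bar>" by linarith
    thus ?thesis by (metis abs_ge_self abs_le_square_iff le_trans one_le_power power2_abs abs_of_nonneg)
  qed
  also have "\<dots> \<le> sqnorm m" unfolding sqnorm_def
    by (rule member_le_sum) auto
  finally show ?thesis .
qed

lemma one_dim_bound:
  fixes a :: real
  assumes a: "a > 1/2"
  shows "(\<Sum>x\<in>{- int R..int R}. (1 + (real_of_int x)^2) powr (-a))
           \<le> 1 + 2 * suminf (\<lambda>n::nat. real n powr (- (2*a)))"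
proof -
  define f where "f x = (1 + (real_of_int x)^2) powr (-a)" for x :: int
  define H where "H = suminf (\<lambda>n::nat. real n powr (- (2*a)))"
  have sH: "summable (\<lambda>n::nat. real n powr (- (2*a)))"
    using a by (subst summable_real_powr_iff) simp
  have fn: "f (int n) \<le> real n powr (- (2*a))" "f (- int n) \<le> real n powr (- (2*a))" if "n \<ge> 1" for n
  proof -
    have "(1 + (real n)^2) powr (-a) \<le> ((real n)^2) powr (-a)"
      using that a by (intro powr_mono2') auto
    also have "((real n)^2) powr (-a) = real n powr (- (2*a))"
    proof -
      have "(real n)^2 = real n powr 2" using that by (simp add: powr_numeral)
      hence "((real n)^2) powr (-a) = (real n powr 2) powr (-a)" by simp
      also have "\<dots> = real n powr (- (2*a))" unfolding powr_powr by simp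
      finally show ?thesis .
    qed
    finally show "f (int n) \<le> real n powr (- (2*a))" "f (- int n) \<le> real n powr (- (2*a))"
      by (simp_all add: f_def)
  qed
  have f0: "f 0 = 1" by (simp add: f_def)
  have f_nn: "f x \<ge> 0" for x by (simp add: f_def)
  have sumH: "(\<Sum>n\<in>{1..R}. real n powr (- (2*a))) \<le> H"
    unfolding H_def by (rule sum_le_suminf[OF sH]) auto
  have split: "{- int R..int R} = {0..int R} \<union> {- int R..-1}" by auto
  have "(\<Sum>x\<in>{- int R..int R}. f x) = (\<Sum>x\<in>{0..int R}. f x) + (\<Sum>x\<in>{- int R..-1}. f x)"
    unfolding split by (rule sum.union_disjoint) auto
  also have "(\<Sum>x\<in>{0..int R}. f x) = (\<Sum>n\<in>{0..R}. f (int n))"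
  proof -
    have "{0..int R} = int ` {0..R}" by (simp add: image_int_atLeastAtMost)
    thus ?thesis by (simp add: sum.reindex)
  qed
  also have "\<dots> = f 0 + (\<Sum>n\<in>{1..R}. f (int n))"
    by (simp add: sum.atLeast_Suc_atMost)
  also have "(\<Sum>n\<in>{1..R}. f (int n)) \<le> H"
    using sumH fn(1) by (meson atLeastAtMost_iff order_trans sum_mono)
  also have "(\<Sum>x\<in>{- int R..-1}. f x) = (\<Sum>n\<in>{1..R}. f (- int n))"
  proof -
    have "{- int R..-1} = (\<lambda>n. - int n) ` {1..R}"
    proof (intro equalityI subsetI)
      fix x assume "x \<in> {- int R..-1}"
      hence "x = - int (nat (-x))" "nat (-x) \<in> {1..R}" by auto
      thus "x \<in> (\<lambda>n. - int n) ` {1..R}" by blast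
    qed auto
    moreover have "inj_on (\<lambda>n. - int n) {1..R}" by (auto simp: inj_on_def)
    ultimately show ?thesis by (simp add: sum.reindex)
  qed
  also have "(\<Sum>n\<in>{1..R}. f (- int n)) \<le> H"
    using sumH fn(2) by (meson atLeastAtMost_iff order_trans sum_mono)
  finally show ?thesis by (simp add: f0 f_def H_def)
qed

lemma pointwise_prod_bound:
  fixes m :: "int^'d::finite"
  assumes m: "m \<noteq> 0" and s: "s > 0"
  shows "sqnorm m powr (-s) \<le> 2 powr s * (\<Prod>c\<in>UNIV. (1 + (real_of_int (m $ c))^2) powr (- (s / CARD('d))))"
proof -
  let ?d = "real CARD('d)"
  have sq1: "sqnorm m \<ge> 1" by (rule sqnorm_ge1[OF m])
  have "(\<Prod>c\<in>UNIV. 1 + (real_of_int (m $ c))^2) \<le> (\<Prod>c\<in>(UNIV::'d set). 2 * sqnorm m)"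
  proof (rule prod_mono)
    fix c :: 'd
    have "(real_of_int (m $ c))^2 \<le> sqnorm m" unfolding sqnorm_def
      by (rule member_le_sum) auto
    thus "0 \<le> 1 + (real_of_int (m $ c))^2 \<and> 1 + (real_of_int (m $ c))^2 \<le> 2 * sqnorm m"
      using sq1 by auto
  qed
  also have "\<dots> = (2 * sqnorm m) ^ CARD('d)" by simp
  finally have P: "(\<Prod>c\<in>UNIV. 1 + (real_of_int (m $ c))^2) \<le> (2 * sqnorm m) ^ CARD('d)" .
  have Ppos: "(\<Prod>c\<in>UNIV. 1 + (real_of_int (m $ c))^2) > 0"
    by (intro prod_pos) (auto intro: add_pos_nonneg)
  have "(2 * sqnorm m) ^ CARD('d) = (2 * sqnorm m) powr ?d"
    by (rule powr_realpow[symmetric]) (use sq1 in auto)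
  hence "((2 * sqnorm m) ^ CARD('d)) powr (- (s / ?d)) = (2 * sqnorm m) powr (?d * (- (s / ?d)))"
    by (simp add: powr_powr)
  hence "(2 * sqnorm m) powr (-s) = ((2 * sqnorm m) ^ CARD('d)) powr (- (s / ?d))"
    by simp
  also have "\<dots> \<le> (\<Prod>c\<in>UNIV. 1 + (real_of_int (m $ c))^2) powr (- (s / ?d))"
    using P Ppos s by (intro powr_mono2') auto
  also have "\<dots> = (\<Prod>c\<in>UNIV. (1 + (real_of_int (m $ c))^2) powr (- (s / ?d)))"
    by (rule prod_powr_distrib)
  finally have "2 powr (-s) * sqnorm m powr (-s) \<le> (\<Prod>c\<in>UNIV. (1 + (real_of_int (m $ c))^2) powr (- (s / ?d)))"
    by (simp add: powr_mult)
  hence "2 powr s * (2 powr (-s) * sqnorm m powr (-s)) \<le> 2 powr s * (\<Prod>c\<in>UNIV. (1 + (real_of_int (m $ c))^2) powr (- (s / ?d)))"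
    by (intro mult_left_mono) auto
  moreover have "2 powr s * (2 powr (-s) * sqnorm m powr (-s)) = sqnorm m powr (-s)"
    by (simp add: powr_minus field_simps)
  ultimately show ?thesis by simp
qed

lemma summable_sq:
  assumes s: "s > real CARD('d) / 2"
  shows "(\<lambda>m::int^'d::finite. sqnorm m powr (-s)) summable_on (UNIV - {0})"
proof (rule nonneg_bdd_above_summable_on)
  let ?d = "real CARD('d)"
  define a where "a = s / ?d"
  have dpos: "?d > 0" by simp
  have spos: "s > 0" using s dpos by linarith
  have a: "a > 1/2" using s dpos by (simp add: a_def field_simps)
  define H where "H = 1 + 2 * suminf (\<lambda>n::nat. real n powr (- (2*a)))"
  show "bdd_above (sum (\<lambda>m::int^'d. sqnorm m powr (-s)) ` {F. F \<subseteq> UNIV - {0} \<and> finite F})"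
  proof (rule bdd_aboveI2)
    fix F :: "(int^'d) set" assume F: "F \<in> {F. F \<subseteq> UNIV - {0} \<and> finite F}"
    define R where "R = (\<Sum>m\<in>F. \<Sum>c\<in>UNIV. nat \<bar>m $ c\<bar>)"
    have bnd: "\<bar>m $ c\<bar> \<le> int R" if "m \<in> F" for m c
    proof -
      have "nat \<bar>m $ c\<bar> \<le> (\<Sum>c\<in>UNIV. nat \<bar>m $ c\<bar>)" by (rule member_le_sum) auto
      also have "\<dots> \<le> R" unfolding R_def using F that by (intro member_le_sum) auto
      finally show ?thesis by linarith
    qed
    let ?B = "Pset {- int R..int R} :: (int^'d) set"
    have FB: "F \<subseteq> ?B - {0}"
    proof
      fix m assume mF: "m \<in> F"
      have "\<forall>c. m $ c \<in> {- int R..int R}"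
      proof
        fix c show "m $ c \<in> {- int R..int R}" using bnd[OF mF, of c] by auto
      qed
      thus "m \<in> ?B - {0}" using F mF by (auto simp: Pset_def)
    qed
    have "(\<Sum>m\<in>F. sqnorm m powr (-s)) \<le> (\<Sum>m\<in>?B - {0}. sqnorm m powr (-s))"
      using FB by (intro sum_mono2) (auto intro: finite_Pset)
    also have "\<dots> \<le> (\<Sum>m\<in>?B - {0}. 2 powr s * (\<Prod>c\<in>UNIV. (1 + (real_of_int (m $ c))^2) powr (- a)))"
      by (intro sum_mono) (auto simp: a_def intro!: pointwise_prod_bound spos)
    also have "\<dots> \<le> (\<Sum>m\<in>?B. 2 powr s * (\<Prod>c\<in>UNIV. (1 + (real_of_int (m $ c))^2) powr (- a)))"
      by (intro sum_mono2) (auto intro: finite_Pset prod_nonneg)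
    also have "\<dots> = 2 powr s * (\<Sum>m\<in>?B. (\<Prod>c\<in>UNIV. (1 + (real_of_int (m $ c))^2) powr (- a)))"
      by (simp add: sum_distrib_left)
    also have "\<dots> = 2 powr s * (\<Prod>c\<in>(UNIV::'d set). \<Sum>x\<in>{- int R..int R}. (1 + (real_of_int x)^2) powr (- a))"
      using sum_Pset_prod[where 'n='d and A="{-int R..int R}" and f="\<lambda>c x. (1 + (real_of_int x)^2) powr (-a)"]
      by simp
    also have "\<dots> \<le> 2 powr s * (\<Prod>c\<in>(UNIV::'d set). H)"
      unfolding H_def using a
      by (intro mult_left_mono prod_mono conjI sum_nonneg one_dim_bound) auto
    finally show "(\<Sum>m\<in>F. sqnorm m powr (-s)) \<le> 2 powr s * H ^ CARD('d)" by simp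
  qed
qed simp


definition ex :: "real \<Rightarrow> complex" where
  "ex r = exp (2 * complex_of_real pi * \<i> * complex_of_real r)"

lemma phi_ex: "phi m x = ex (ip m x)" by (simp add: phi_def ex_def)

lemma ex_add: "ex (a + b) = ex a * ex b"
  by (simp add: ex_def distrib_left exp_add[symmetric])

lemma ex_int: "ex (of_int n) = 1"
proof -
  have "ex (of_int n) = exp ((2 * of_int n * pi) * \<i>)" by (simp add: ex_def ac_simps)
  also have "\<dots> = 1" by (rule exp_integer_2pi) simp
  finally show ?thesis .
qed

lemma ex_cnj: "cnj (ex r) = ex (- r)"
  by (simp add: ex_def exp_cnj)

lemma ex_power: "ex r ^ n = ex (real n * r)"
  by (simp add: ex_def exp_of_nat_mult[symmetric] ac_simps)

lemma ex_eq_1: "ex r = 1 \<Longrightarrow> r \<in> \<int>"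
proof -
  assume "ex r = 1"
  then obtain n :: int where "Im (2 * complex_of_real pi * \<i> * complex_of_real r) = of_int (2 * n) * pi"
    unfolding ex_def exp_eq_1 by blast
  hence "2 * pi * r = 2 * of_int n * pi" by simp
  hence "r = of_int n" by simp
  thus ?thesis by simp
qed

lemma ex_0: "ex 0 = 1" by (simp add: ex_def)

lemma ex_sum: "finite A \<Longrightarrow> ex (\<Sum>x\<in>A. f x) = (\<Prod>x\<in>A. ex (f x))"
  by (induction A rule: finite_induct) (auto simp: ex_add ex_0)

lemma geo_ex:
  fixes r :: int and q :: nat
  assumes "- (2^q) < r" "r < 2^q"
  shows "(\<Sum>a\<in>{0..<(2::int)^q}. ex (real_of_int (r * a) / 2 ^ q)) = (if r = 0 then 2 ^ q else 0)"
proof -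
  define N :: nat where "N = 2 ^ q"
  have N: "(2::int)^q = int N" by (simp add: N_def)
  define z where "z = ex (real_of_int r / 2 ^ q)"
  have "(\<Sum>a\<in>{0..<(2::int)^q}. ex (real_of_int (r * a) / 2 ^ q)) = (\<Sum>n\<in>{0..<N}. ex (real_of_int (r * int n) / 2 ^ q))"
  proof -
    have "{0..<(2::int)^q} = int ` {0..<N}" unfolding N by (simp add: image_int_atLeastLessThan)
    thus ?thesis by (simp add: sum.reindex)
  qed
  also have "\<dots> = (\<Sum>n<N. z ^ n)"
    by (intro sum.cong) (auto simp: z_def ex_power atLeast0LessThan ac_simps)
  also have "\<dots> = (if r = 0 then 2 ^ q else 0)"
  proof (cases "r = 0")
    case True
    hence "z = 1" by (simp add: z_def ex_def)
    thus ?thesis using True by (simp add: N_def)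
  next
    case False
    have "z \<noteq> 1"
    proof
      assume "z = 1"
      then obtain n where n: "real_of_int r / 2 ^ q = of_int n" unfolding z_def using ex_eq_1 Ints_cases by metis
      hence "r = n * 2 ^ q" by (simp add: field_simps) (metis of_int_eq_iff of_int_mult of_int_numeral of_int_power)
      have P: "(2::int)^q > 0" by simp
      show False
      proof (cases "n \<ge> 1")
        case True
        hence "1 * 2^q \<le> n * (2::int)^q" by (intro mult_right_mono) auto
        thus False using assms \<open>r = n * 2 ^ q\<close> by simp
      next
        case n0: False
        have "n \<noteq> 0" using False \<open>r = n * 2 ^ q\<close> by auto
        hence "n \<le> -1" using n0 by simp
        hence "n * (2::int)^q \<le> -1 * 2^q" by (intro mult_right_mono) auto
        thus False using assms \<open>r = n * 2 ^ q\<close> by simp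
      qed
    qed
    moreover have "z ^ N = 1"
    proof -
      have "z ^ N = ex (real N * (real_of_int r / 2 ^ q))" by (simp add: z_def ex_power)
      also have "real N * (real_of_int r / 2 ^ q) = of_int r" by (simp add: N_def)
      finally show ?thesis by (simp add: ex_int)
    qed
    ultimately show ?thesis using False by (simp add: sum_gp_strict)
  qed
  finally show ?thesis .
qed

lemma ip_grid: "ip m (gridpt q y) = (\<Sum>c\<in>UNIV. real_of_int (m $ c * y $ c) / 2 ^ q)"
  by (simp add: ip_def gridpt_def)

lemma phi_grid_prod: "cnj (phi k (gridpt q y)) * phi l (gridpt q y)
   = (\<Prod>c\<in>UNIV. ex (real_of_int ((l $ c - k $ c) * y $ c) / 2 ^ q))"
proof -
  have "cnj (phi k (gridpt q y)) * phi l (gridpt q y) = ex (ip l (gridpt q y) - ip k (gridpt q y))"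
    by (simp add: phi_ex ex_cnj ex_add[symmetric])
  also have "ip l (gridpt q y) - ip k (gridpt q y) = (\<Sum>c\<in>UNIV. real_of_int ((l $ c - k $ c) * y $ c) / 2 ^ q)"
    by (simp add: ip_grid sum_subtractf[symmetric] diff_divide_distrib left_diff_distrib)
  finally show ?thesis by (simp add: ex_sum)
qed

lemma orth:
  fixes k l :: "int^'d::finite"
  assumes k: "k \<in> Jq q" and l: "l \<in> Jq q"
  shows "(\<Sum>y\<in>Jq q. cnj (phi k (gridpt q y)) * phi l (gridpt q y)) = (if k = l then 2 ^ (q * CARD('d)) else 0)"
proof -
  have "(\<Sum>y\<in>Jq q. cnj (phi k (gridpt q y)) * phi l (gridpt q y))
      = (\<Sum>y\<in>Pset {0..<(2::int)^q}. \<Prod>c\<in>UNIV. ex (real_of_int ((l $ c - k $ c) * y $ c) / 2 ^ q))"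
    by (simp add: phi_grid_prod Jq_Pset)
  also have "\<dots> = (\<Prod>c\<in>UNIV. \<Sum>a\<in>{0..<(2::int)^q}. ex (real_of_int ((l $ c - k $ c) * a) / 2 ^ q))"
    by (rule sum_Pset_prod) simp
  also have "\<dots> = (\<Prod>c\<in>(UNIV::'d set). if l $ c - k $ c = 0 then 2 ^ q else 0)"
  proof (rule prod.cong[OF refl])
    fix c
    have "0 \<le> k $ c" "k $ c < 2^q" "0 \<le> l $ c" "l $ c < 2^q" using k l by (auto simp: Jq_def)
    hence "- (2^q) < l $ c - k $ c" "l $ c - k $ c < 2^q" by linarith+
    thus "(\<Sum>a\<in>{0..<(2::int)^q}. ex (real_of_int ((l $ c - k $ c) * a) / 2 ^ q)) = (if l $ c - k $ c = 0 then 2 ^ q else 0)"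
      by (rule geo_ex)
  qed
  also have "\<dots> = (if k = l then 2 ^ (q * CARD('d)) else 0)"
  proof (cases "k = l")
    case True thus ?thesis by (simp add: power_mult)
  next
    case False
    then obtain c where "l $ c - k $ c \<noteq> 0" by (metis Finite_Cartesian_Product.vec_eq_iff eq_iff_diff_eq_0)
    hence "(\<Prod>c\<in>(UNIV::'d set). if l $ c - k $ c = 0 then (2::complex) ^ q else 0) = 0"
      by (intro prod_zero) auto
    thus ?thesis using False by simp
  qed
  finally show ?thesis .
qed


definition cc :: "real \<Rightarrow> int^'d::finite \<Rightarrow> real" where
  "cc t m = (4 * pi^2 * sqnorm m) powr (-t)"

definition Res :: "nat \<Rightarrow> int^'d::finite \<Rightarrow> (int^'d) set" where
  "Res q k = {m. m \<noteq> 0 \<and> (\<forall>c. m $ c mod 2^q = k $ c)}"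

definition mu :: "real \<Rightarrow> nat \<Rightarrow> int^'d::finite \<Rightarrow> real" where
  "mu t q k = infsum (cc t) (Res q k)"

lemma cc_nonneg: "cc t m \<ge> 0" by (simp add: cc_def)

lemma cc_eq: "cc t m = (4 * pi^2) powr (-t) * sqnorm m powr (-t)"
  unfolding cc_def by (rule powr_mult)

lemma summable_cc:
  assumes "t > real CARD('d) / 2"
  shows "(cc t :: int^'d::finite \<Rightarrow> real) summable_on (UNIV - {0})"
proof -
  have "(\<lambda>m::int^'d. (4 * pi^2) powr (-t) * sqnorm m powr (-t)) summable_on (UNIV - {0})"
    by (rule summable_on_cmult_right) (rule summable_sq[OF assms])
  thus ?thesis by (simp add: cc_eq[abs_def])
qed

lemma Res_part: "(\<Union>k\<in>Jq q. Res q k) = (UNIV - {0} :: (int^'d::finite) set)"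
proof (intro equalityI subsetI)
  fix m :: "int^'d" assume "m \<in> UNIV - {0}"
  hence "m \<in> Res q (\<chi> c. m $ c mod 2^q)" "(\<chi> c. m $ c mod 2^q) \<in> Jq q"
    by (auto simp: Res_def Jq_def)
  thus "m \<in> (\<Union>k\<in>Jq q. Res q k)" by blast
qed (auto simp: Res_def)

lemma Res_disj: "k \<noteq> l \<Longrightarrow> Res q k \<inter> Res q (l::int^'d::finite) = {}"
  by (auto simp: Res_def Finite_Cartesian_Product.vec_eq_iff)

lemma phi_mod:
  assumes "\<forall>c. m $ c mod 2^q = k $ c"
  shows "phi m (gridpt q y) = phi k (gridpt q y)"
proof -
  define n where "n = (\<Sum>c\<in>UNIV. (m $ c div 2^q) * y $ c)"
  have "ip m (gridpt q y) = ip k (gridpt q y) + of_int n"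
  proof -
    have e: "m $ c = k $ c + 2^q * (m $ c div 2^q)" for c
      using assms by (metis add.commute div_mult_mod_eq mult.commute)
    have "ip m (gridpt q y) = (\<Sum>c\<in>UNIV. real_of_int (k $ c * y $ c) / 2 ^ q + real_of_int ((m $ c div 2^q) * y $ c))"
      unfolding ip_grid by (intro sum.cong refl, subst e) (simp add: field_simps)
    also have "\<dots> = ip k (gridpt q y) + of_int n"
      by (simp add: ip_grid n_def sum.distrib)
    finally show ?thesis .
  qed
  thus ?thesis by (simp add: phi_ex ex_add ex_int)
qed

lemma infsum_of_real':
  "f summable_on A \<Longrightarrow> infsum (\<lambda>x. complex_of_real (f x)) A = complex_of_real (infsum f A)"
  by (rule infsumI) (rule has_sum_of_real, simp)


lemma gram_decomp:
  assumes t: "t > real CARD('d) / 2"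
  shows "gram t q i j = (\<Sum>k\<in>(Jq q :: (int^'d::finite) set). phi k (gridpt q i) * complex_of_real (mu t q k) * cnj (phi k (gridpt q j)))"
proof -
  let ?F = "\<lambda>m::int^'d. complex_of_real (cc t m) * phi m (gridpt q i) * cnj (phi m (gridpt q j))"
  have onR: "?F m = complex_of_real (cc t m) * (phi k (gridpt q i) * cnj (phi k (gridpt q j)))"
    if "m \<in> Res q k" for m k :: "int^'d"
    using that phi_mod[where m=m and q=q and k=k] by (auto simp: Res_def)
  have sR: "cc t summable_on Res q k" for k :: "int^'d"
  proof -
    have "Res q k \<subseteq> UNIV - {0}" by (auto simp: Res_def)
    thus ?thesis by (rule summable_on_subset_banach[OF summable_cc[OF t]])
  qed
  have sF: "?F summable_on Res q k" for k :: "int^'d"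
  proof -
    have "(\<lambda>m. complex_of_real (cc t m) * (phi k (gridpt q i) * cnj (phi k (gridpt q j)))) summable_on Res q k"
      by (rule summable_on_cmult_left, rule summable_on_of_real, rule sR)
    moreover have c: "\<And>m. m \<in> Res q k \<Longrightarrow> ?F m = complex_of_real (cc t m) * (phi k (gridpt q i) * cnj (phi k (gridpt q j)))"
      by (rule onR)
    moreover have "?F summable_on Res q k \<longleftrightarrow> (\<lambda>m. complex_of_real (cc t m) * (phi k (gridpt q i) * cnj (phi k (gridpt q j)))) summable_on Res q k"
      by (rule summable_on_cong) (rule c)
    ultimately show ?thesis by simp
  qed
  have "gram t q i j = infsum ?F (\<Union>k\<in>Jq q. Res q k)"
    by (simp add: gram_def Kt_def Res_part cc_def)
  also have "\<dots> = (\<Sum>k\<in>Jq q. infsum ?F (Res q k))"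
    by (rule sum_infsum[symmetric]) (auto simp: finite_Jq sF Res_disj)
  also have "\<dots> = (\<Sum>k\<in>Jq q. phi k (gridpt q i) * complex_of_real (mu t q k) * cnj (phi k (gridpt q j)))"
  proof (rule sum.cong[OF refl])
    fix k :: "int^'d"
    have "infsum ?F (Res q k) = infsum (\<lambda>m. complex_of_real (cc t m) * (phi k (gridpt q i) * cnj (phi k (gridpt q j)))) (Res q k)"
      by (rule infsum_cong, rule onR)
    also have "\<dots> = infsum (\<lambda>m. complex_of_real (cc t m)) (Res q k) * (phi k (gridpt q i) * cnj (phi k (gridpt q j)))"
      by (rule infsum_cmult_left, rule summable_on_of_real, rule sR)
    also have "\<dots> = complex_of_real (mu t q k) * (phi k (gridpt q i) * cnj (phi k (gridpt q j)))"
      by (simp add: infsum_of_real'[OF sR] mu_def)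
    finally show "infsum ?F (Res q k) = phi k (gridpt q i) * complex_of_real (mu t q k) * cnj (phi k (gridpt q j))"
      by (simp add: ac_simps)
  qed
  finally show ?thesis .
qed

lemma det_gram:
  assumes t: "t > real CARD('d) / 2"
  shows "det_on (Jq q :: (int^'d::finite) set) (gram t q) =
     (2 ^ (q * CARD('d))) ^ (2 ^ (q * CARD('d))) * (\<Prod>k\<in>(Jq q :: (int^'d) set). complex_of_real (mu t q k))"
proof -
  have "det_on (Jq q :: (int^'d::finite) set) (gram t q) =
     (2 ^ (q * CARD('d))) ^ card (Jq q :: (int^'d) set) * (\<Prod>k\<in>(Jq q :: (int^'d) set). complex_of_real (mu t q k))"
  proof -
    have A: "\<And>x y. x \<in> Jq q \<Longrightarrow> y \<in> Jq q \<Longrightarrow> gram t q x y =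
       (\<Sum>k\<in>(Jq q :: (int^'d) set). phi k (gridpt q x) * complex_of_real (mu t q k) * cnj (phi k (gridpt q y)))"
      by (rule gram_decomp[OF t])
    have B: "\<And>k l. k \<in> Jq q \<Longrightarrow> l \<in> (Jq q :: (int^'d) set) \<Longrightarrow>
       (\<Sum>y\<in>Jq q. cnj (phi k (gridpt q y)) * phi l (gridpt q y)) = (if k = l then 2 ^ (q * CARD('d)) else 0)"
      by (rule orth)
    show ?thesis by (rule det_on_factor[OF finite_Jq A B])
  qed
  thus ?thesis by (simp add: card_Jq)
qed


lemma Jq0: "Jq 0 = {0}"
proof (intro equalityI subsetI)
  fix x :: "int^'a" assume "x \<in> Jq 0"
  hence h: "\<And>i. 0 \<le> x $ i \<and> x $ i < 1" by (simp add: Jq_def)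
  have "x $ i = 0" for i using h[of i] by linarith
  thus "x \<in> {0}" by (simp add: Finite_Cartesian_Product.vec_eq_iff)
qed (simp add: Jq_def)

lemma sqnorm_scale: "sqnorm (\<chi> c. a * n $ c) = (real_of_int a)^2 * sqnorm (n :: int^'d::finite)"
  by (simp add: sqnorm_def sum_distrib_left power_mult_distrib)

lemma mu_zero:
  assumes t: "t > real CARD('d) / 2"
  shows "mu t q (0::int^'d::finite) = (2^q) powr (-2*t) * infsum (cc t) (UNIV - {0::int^'d})"
proof -
  let ?M = "(2::int)^q"
  let ?s = "\<lambda>n::int^'d. \<chi> c. ?M * n $ c"
  have inj: "inj_on ?s (UNIV - {0})"
    by (auto simp: inj_on_def Finite_Cartesian_Product.vec_eq_iff)
  have img: "Res q 0 = ?s ` (UNIV - {0})"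
  proof (intro equalityI subsetI)
    fix m assume m: "m \<in> Res q (0::int^'d)"
    have "m $ c = ?M * (m $ c div ?M)" for c
    proof -
      have "m $ c mod ?M = 0" using m by (simp add: Res_def)
      thus ?thesis using div_mult_mod_eq[of "m $ c" ?M] by (simp add: mult.commute)
    qed
    hence "m = ?s (\<chi> c. m $ c div ?M)"
      by (simp add: Finite_Cartesian_Product.vec_eq_iff)
    moreover have "(\<chi> c. m $ c div ?M) \<noteq> 0"
    proof
      assume "(\<chi> c. m $ c div ?M) = 0"
      with \<open>m = _\<close> have "m = 0" by (simp add: Finite_Cartesian_Product.vec_eq_iff)
      with m show False by (simp add: Res_def)
    qed
    ultimately show "m \<in> ?s ` (UNIV - {0})" by blast
  next
    fix m assume "m \<in> ?s ` (UNIV - {0})"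
    then obtain n where n: "n \<noteq> 0" "m = ?s n" by auto
    hence "m \<noteq> 0" by (auto simp: Finite_Cartesian_Product.vec_eq_iff)
    thus "m \<in> Res q 0" using n by (simp add: Res_def)
  qed
  have ccs: "cc t (?s n) = (2^q) powr (-2*t) * cc t n" for n :: "int^'d"
  proof -
    have "cc t (?s n) = (((2::real)^q)^2 * (4 * pi^2 * sqnorm n)) powr (-t)"
      unfolding cc_def sqnorm_scale by (simp add: ac_simps)
    also have "\<dots> = (((2::real)^q)^2) powr (-t) * cc t n"
      unfolding cc_def by (rule powr_mult)
    also have "(((2::real)^q)^2) powr (-t) = (2^q) powr (-2*t)"
    proof -
      have "((2::real)^q)^2 = (2^q) powr 2" by (simp add: powr_numeral)
      hence "(((2::real)^q)^2) powr (-t) = ((2^q) powr 2) powr (-t)" by simp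
      also have "\<dots> = (2^q) powr (-2*t)" unfolding powr_powr by simp
      finally show ?thesis .
    qed
    finally show ?thesis .
  qed
  have "mu t q (0::int^'d) = infsum (cc t \<circ> ?s) (UNIV - {0})"
    unfolding mu_def img by (rule infsum_reindex[OF inj])
  also have "\<dots> = infsum (\<lambda>n::int^'d. (2^q) powr (-2*t) * cc t n) (UNIV - {0})"
    by (rule infsum_cong) (simp add: ccs)
  also have "\<dots> = (2^q) powr (-2*t) * infsum (cc t) (UNIV - {0::int^'d})"
    by (rule infsum_cmult_right) (rule summable_cc[OF t])
  finally show ?thesis .
qed

lemma coord_bound:
  fixes x y M :: int
  assumes "- M < 2 * x" "2 * x \<le> M" "M > 0"
  shows "M^2 * y^2 \<le> 4 * (x + M * y)^2"
proof (cases "y = 0")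
  case True thus ?thesis by simp
next
  case False
  define P where "P = M * y"
  have "\<bar>P\<bar> \<le> \<bar>2 * (x + P)\<bar>"
  proof (cases "y > 0")
    case True
    have "M * 1 \<le> M * y" by (rule mult_left_mono) (use True assms in auto)
    hence "M \<le> P" by (simp add: P_def)
    hence "0 \<le> P \<and> P \<le> 2 * (x + P)" using assms by arith
    thus ?thesis by simp
  next
    case nP: False
    hence "y \<le> -1" using False by simp
    have "M * y \<le> M * (-1)" by (rule mult_left_mono) (use \<open>y \<le> -1\<close> assms in auto)
    hence "P \<le> - M" by (simp add: P_def)
    hence "P \<le> 0 \<and> 2 * (x + P) \<le> P" using assms by arith
    thus ?thesis by simp
  qed
  hence "\<bar>M * y\<bar> \<le> \<bar>2 * (x + M * y)\<bar>" by (simp add: P_def)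
  hence "\<bar>M * y\<bar>^2 \<le> \<bar>2 * (x + M * y)\<bar>^2" by (rule power_mono) simp
  hence "(M * y)^2 \<le> (2 * (x + M * y))^2" by (simp only: power2_abs)
  also have "(2 * (x + M * y))^2 = 4 * (x + M * y)^2" by (simp only: power_mult_distrib) simp
  finally show ?thesis by (simp only: power_mult_distrib)
qed

definition ksv :: "nat \<Rightarrow> int^'d \<Rightarrow> int^'d" where
  "ksv q k = (\<chi> c. cen q (k $ c))"

lemma cen_mod': "0 \<le> a \<Longrightarrow> a < 2^q \<Longrightarrow> cen q a mod 2^q = a"
  by (auto simp: cen_def)

lemma ksv_nonzero:
  assumes "k \<in> Jq q" "k \<noteq> 0" shows "ksv q k \<noteq> 0"
proof
  assume "ksv q k = 0"
  hence "\<forall>c. cen q (k $ c) = 0" by (simp add: ksv_def Finite_Cartesian_Product.vec_eq_iff)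
  hence "\<forall>c. k $ c = 0" using assms(1) cen_zero_iff by (auto simp: Jq_def)
  thus False using assms(2) by (metis Finite_Cartesian_Product.vec_eq_iff zero_index)
qed

lemma ksv_Res:
  assumes "k \<in> Jq q" "k \<noteq> 0" shows "ksv q k \<in> Res q k"
  using assms ksv_nonzero[OF assms] by (auto simp: Res_def ksv_def Jq_def cen_mod')

lemma cc_pos: "m \<noteq> 0 \<Longrightarrow> cc t (m::int^'d::finite) > 0"
  using sqnorm_ge1[of m] by (simp add: cc_def)

lemma ksv_sq_le: "k \<in> Jq q \<Longrightarrow> sqnorm (ksv q (k::int^'d::finite)) \<le> real CARD('d) * ((2::real)^q)^2 / 4"
proof -
  assume k: "k \<in> Jq q"
  have cb: "(real_of_int (cen q (k $ c)))^2 \<le> ((2::real)^q)^2 / 4" for c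
  proof -
    have "inb q (cen q (k $ c))" using k by (auto simp: Jq_def intro: cen_range)
    hence "\<bar>2 * cen q (k $ c)\<bar> \<le> 2^q" by (auto simp: inb_def)
    hence "\<bar>2 * cen q (k $ c)\<bar>^2 \<le> (2^q)^2" by (rule power_mono) simp
    hence "4 * (cen q (k $ c))^2 \<le> ((2::int)^q)^2" by (simp add: power_mult_distrib)
    hence "real_of_int (4 * (cen q (k $ c))^2) \<le> real_of_int (((2::int)^q)^2)" by (simp only: of_int_le_iff)
    hence "4 * (real_of_int (cen q (k $ c)))^2 \<le> ((2::real)^q)^2" by simp
    thus ?thesis by simp
  qed
  have "sqnorm (ksv q k) \<le> (\<Sum>c\<in>(UNIV::'d set). ((2::real)^q)^2 / 4)"
    unfolding sqnorm_def ksv_def by (rule sum_mono) (subst vec_lambda_beta, rule cb)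
  thus ?thesis by simp
qed


lemma cen_mod_k: "k \<in> Jq q \<Longrightarrow> cen q (k $ c) mod 2^q = k $ c"
  by (auto simp: Jq_def cen_mod')

lemma sq_shift:
  fixes ks n :: "int^'d::finite"
  assumes "\<forall>c. inb q (ks $ c)"
  shows "((2::real)^q)^2 * sqnorm n / 4 \<le> sqnorm (\<chi> c. ks $ c + 2^q * n $ c)"
proof -
  have "((2::real)^q)^2 * (real_of_int (n $ c))^2 / 4 \<le> (real_of_int (ks $ c + 2^q * n $ c))^2" for c
  proof -
    have "(2^q)^2 * (n $ c)^2 \<le> 4 * (ks $ c + 2^q * n $ c)^2"
      using assms[rule_format, of c] by (intro coord_bound) (auto simp: inb_def)
    hence "real_of_int ((2^q)^2 * (n $ c)^2) \<le> real_of_int (4 * (ks $ c + 2^q * n $ c)^2)"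
      by (simp only: of_int_le_iff)
    thus ?thesis by simp
  qed
  hence "(\<Sum>c\<in>UNIV. ((2::real)^q)^2 * (real_of_int (n $ c))^2 / 4) \<le> sqnorm (\<chi> c. ks $ c + 2^q * n $ c)"
    unfolding sqnorm_def by (intro sum_mono) simp
  thus ?thesis by (simp add: sqnorm_def sum_distrib_left sum_divide_distrib)
qed

lemma cc_shift_bound:
  fixes k n :: "int^'d::finite"
  assumes k: "k \<in> Jq q" "k \<noteq> 0" and n: "n \<noteq> 0" and t: "s0 \<le> t" "t \<le> T" and s0: "0 \<le> s0"
  shows "cc t (\<chi> c. ksv q k $ c + 2^q * n $ c) \<le> cc t (ksv q k) * (real CARD('d) powr T * sqnorm n powr (-s0))"
proof -
  let ?d = "real CARD('d)"
  let ?ks = "ksv q k"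
  let ?M = "(2::real)^q"
  have inbk: "\<forall>c. inb q (?ks $ c)" using k(1) by (auto simp: ksv_def Jq_def intro: cen_range)
  have sqks: "sqnorm ?ks \<le> ?d * ?M^2 / 4" by (rule ksv_sq_le[OF k(1)])
  have sqks1: "sqnorm ?ks \<ge> 1" by (rule sqnorm_ge1[OF ksv_nonzero[OF k]])
  have sqn1: "sqnorm n \<ge> 1" by (rule sqnorm_ge1[OF n])
  have dpos: "?d \<ge> 1" by simp
  have low: "sqnorm ?ks * sqnorm n / ?d \<le> sqnorm (\<chi> c. ?ks $ c + 2^q * n $ c)"
  proof -
    have "sqnorm ?ks / ?d \<le> ?M^2 / 4" using sqks dpos by (simp add: field_simps)
    hence "sqnorm ?ks / ?d * sqnorm n \<le> ?M^2 / 4 * sqnorm n"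
      using sqn1 by (intro mult_right_mono) auto
    also have "\<dots> \<le> sqnorm (\<chi> c. ?ks $ c + 2^q * n $ c)"
      using sq_shift[OF inbk, of n] by simp
    finally show ?thesis by simp
  qed
  have pos: "0 < 4 * pi^2 * (sqnorm ?ks * sqnorm n / ?d)"
    using sqks1 sqn1 by (intro mult_pos_pos) auto
  have "cc t (\<chi> c. ?ks $ c + 2^q * n $ c) \<le> (4 * pi^2 * (sqnorm ?ks * sqnorm n / ?d)) powr (-t)"
  proof -
    have "4 * pi^2 * (sqnorm ?ks * sqnorm n / ?d) \<le> 4 * pi^2 * sqnorm (\<chi> c. ?ks $ c + 2^q * n $ c)"
      by (rule mult_left_mono[OF low]) simp
    thus ?thesis unfolding cc_def using pos t s0 by (intro powr_mono2') auto
  qed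
  also have "\<dots> = cc t ?ks * (sqnorm n / ?d) powr (-t)"
    unfolding cc_def by (subst powr_mult[symmetric]) (auto simp: ac_simps)
  also have "(sqnorm n / ?d) powr (-t) = sqnorm n powr (-t) * ?d powr t"
    using dpos sqn1 by (simp add: powr_divide powr_minus_divide)
  finally have A: "cc t (\<chi> c. ?ks $ c + 2^q * n $ c) \<le> cc t ?ks * (sqnorm n powr (-t) * ?d powr t)" .
  have B: "sqnorm n powr (-t) * ?d powr t \<le> sqnorm n powr (-s0) * ?d powr T"
    using t sqn1 dpos by (intro mult_mono powr_mono) auto
  have "cc t ?ks * (sqnorm n powr (-t) * ?d powr t) \<le> cc t ?ks * (sqnorm n powr (-s0) * ?d powr T)"
    by (rule mult_left_mono[OF B cc_nonneg])
  with A show ?thesis by (simp add: ac_simps)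
qed

lemma mu_lower:
  fixes k :: "int^'d::finite"
  assumes k: "k \<in> Jq q" "k \<noteq> 0" and t: "t > real CARD('d) / 2"
  shows "cc t (ksv q k) \<le> mu t q k"
proof -
  have sR: "cc t summable_on Res q k"
  proof -
    have "Res q k \<subseteq> UNIV - {0}" by (auto simp: Res_def)
    thus ?thesis by (rule summable_on_subset_banach[OF summable_cc[OF t]])
  qed
  have "cc t (ksv q k) = infsum (cc t) {ksv q k}" by simp
  also have "\<dots> \<le> infsum (cc t) (Res q k)"
    by (rule infsum_mono2) (auto simp: sR ksv_Res[OF k] cc_nonneg)
  finally show ?thesis by (simp add: mu_def)
qed

lemma mu_upper:
  fixes k :: "int^'d::finite"
  assumes k: "k \<in> Jq q" "k \<noteq> 0" and t: "s0 \<le> t" "t \<le> T" and s0: "s0 > real CARD('d) / 2"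
  shows "mu t q k \<le> cc t (ksv q k) * (1 + real CARD('d) powr T * infsum (\<lambda>n::int^'d. sqnorm n powr (-s0)) (UNIV - {0}))"
proof -
  let ?d = "real CARD('d)"
  let ?ks = "ksv q k"
  let ?sh = "\<lambda>n::int^'d. \<chi> c. ?ks $ c + 2^q * n $ c"
  have t0: "t > ?d / 2" using t s0 by linarith
  have s00: "0 \<le> s0" using s0 by (smt (verit) of_nat_0_le_iff divide_nonneg_nonneg)
  have inj: "inj_on ?sh UNIV"
    by (auto simp: inj_on_def Finite_Cartesian_Product.vec_eq_iff)
  have ksmod: "?ks $ c mod 2^q = k $ c" for c using k(1) by (simp add: ksv_def cen_mod_k)
  have img: "Res q k = ?sh ` UNIV"
  proof (intro equalityI subsetI)
    fix m assume m: "m \<in> Res q k"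
    have "m $ c = ?ks $ c + 2^q * ((m $ c - ?ks $ c) div 2^q)" for c
    proof -
      have "(m $ c - ?ks $ c) mod 2^q = 0"
        using m ksmod[of c] by (simp add: Res_def mod_diff_eq[symmetric])
      thus ?thesis using div_mult_mod_eq[of "m $ c - ?ks $ c" "2^q"] by (simp add: mult.commute)
    qed
    hence "m = ?sh (\<chi> c. (m $ c - ?ks $ c) div 2^q)"
      by (simp add: Finite_Cartesian_Product.vec_eq_iff)
    thus "m \<in> ?sh ` UNIV" by blast
  next
    fix m assume "m \<in> ?sh ` UNIV"
    then obtain n where mn: "m = ?sh n" by auto
    have mm: "m $ c mod 2^q = k $ c" for c using ksmod[of c] by (simp add: mn)
    have "m \<noteq> 0"
    proof
      assume "m = 0"
      hence "k $ c = 0" for c using mm[of c] by simp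
      thus False using k(2) by (metis Finite_Cartesian_Product.vec_eq_iff zero_index)
    qed
    thus "m \<in> Res q k" using mm by (simp add: Res_def)
  qed
  have sR: "cc t summable_on Res q k"
  proof -
    have "Res q k \<subseteq> UNIV - {0}" by (auto simp: Res_def)
    thus ?thesis by (rule summable_on_subset_banach[OF summable_cc[OF t0]])
  qed
  hence s1: "(cc t \<circ> ?sh) summable_on UNIV"
    unfolding img using summable_on_reindex[OF inj] by blast
  define S0 where "S0 = infsum (\<lambda>n::int^'d. sqnorm n powr (-s0)) (UNIV - {0})"
  define h where "h n = (if n = 0 then 1 else ?d powr T * sqnorm n powr (-s0))" for n :: "int^'d"
  have sS: "(\<lambda>n::int^'d. sqnorm n powr (-s0)) summable_on (UNIV - {0})" by (rule summable_sq[OF s0])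
  have hS: "h summable_on (UNIV - {0})"
  proof -
    have "(\<lambda>n::int^'d. ?d powr T * sqnorm n powr (-s0)) summable_on (UNIV - {0})"
      by (rule summable_on_cmult_right[OF sS])
    moreover have "(\<lambda>n::int^'d. ?d powr T * sqnorm n powr (-s0)) summable_on (UNIV - {0}) \<longleftrightarrow> h summable_on (UNIV - {0})"
      by (rule summable_on_cong) (simp add: h_def)
    ultimately show ?thesis by simp
  qed
  have hU: "h summable_on UNIV"
  proof -
    have "UNIV = insert (0::int^'d) (UNIV - {0})" by auto
    thus ?thesis using hS summable_on_insert_iff by metis
  qed
  have hsum: "infsum h UNIV = 1 + ?d powr T * S0"
  proof -
    have "infsum h UNIV = infsum h (insert 0 (UNIV - {0}))" by (simp add: insert_absorb)
    also have "\<dots> = h 0 + infsum h (UNIV - {0})" by (rule infsum_insert[OF hS]) simp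
    also have "infsum h (UNIV - {0}) = infsum (\<lambda>n::int^'d. ?d powr T * sqnorm n powr (-s0)) (UNIV - {0})"
      by (rule infsum_cong) (simp add: h_def)
    also have "\<dots> = ?d powr T * S0" unfolding S0_def by (rule infsum_cmult_right[OF sS])
    finally show ?thesis by (simp add: h_def[of 0])
  qed
  have pw: "(cc t \<circ> ?sh) n \<le> cc t ?ks * h n" for n
  proof (cases "n = 0")
    case True
    have "?sh n = ?ks" using True by (simp add: Finite_Cartesian_Product.vec_eq_iff)
    thus ?thesis using True by (simp add: h_def)
  next
    case False
    thus ?thesis using cc_shift_bound[OF k False t s00] by (simp add: h_def)
  qed
  have "mu t q k = infsum (cc t \<circ> ?sh) UNIV"
    unfolding mu_def img by (rule infsum_reindex[OF inj])
  also have "\<dots> \<le> infsum (\<lambda>n. cc t ?ks * h n) UNIV"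
    by (rule infsum_mono[OF s1 summable_on_cmult_right[OF hU] pw])
  also have "\<dots> = cc t ?ks * infsum h UNIV" by (rule infsum_cmult_right[OF hU])
  finally show ?thesis by (simp add: hsum S0_def)
qed


lemma inb_sq: "inb j x \<Longrightarrow> 4 * (real_of_int x)^2 \<le> ((2::real)^j)^2"
proof -
  assume "inb j x"
  hence "\<bar>2 * x\<bar> \<le> 2^j" by (auto simp: inb_def)
  hence "\<bar>2 * x\<bar>^2 \<le> (2^j)^2" by (rule power_mono) simp
  hence "4 * x^2 \<le> ((2::int)^j)^2" by (simp add: power_mult_distrib)
  hence "real_of_int (4 * x^2) \<le> real_of_int (((2::int)^j)^2)" by (simp only: of_int_le_iff)
  thus ?thesis by simp
qed

lemma not_inb_sq: "\<not> inb j x \<Longrightarrow> ((2::real)^j)^2 \<le> 4 * (real_of_int x)^2"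
proof -
  assume "\<not> inb j x"
  hence "2^j \<le> \<bar>2 * x\<bar>" by (auto simp: inb_def)
  hence "(2^j)^2 \<le> \<bar>2 * x\<bar>^2" by (rule power_mono) simp
  hence "((2::int)^j)^2 \<le> 4 * x^2" by (simp add: power_mult_distrib)
  hence "real_of_int (((2::int)^j)^2) \<le> real_of_int (4 * x^2)" by (simp only: of_int_le_iff)
  thus ?thesis by simp
qed

lemma ksv_sq_lev:
  fixes k :: "int^'d::finite"
  assumes k: "k \<in> Jq q" "k \<noteq> 0"
  shows "((2::real) ^ lev q k)^2 / 16 \<le> sqnorm (ksv q k)"
        "sqnorm (ksv q k) \<le> real CARD('d) * ((2::real) ^ lev q k)^2 / 4"
proof -
  let ?l = "lev q k"
  note lp = lev_props[OF k]
  obtain c where c: "\<not> inb (?l - 1) (cen q (k $ c))" using lp(3) by blast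
  have "((2::real)^(?l - 1))^2 \<le> 4 * (real_of_int (cen q (k $ c)))^2" by (rule not_inb_sq[OF c])
  moreover have "(2::real)^?l = 2 * 2^(?l - 1)"
  proof -
    obtain j where j: "?l = Suc j" using lp(1) by (cases "?l") auto
    thus ?thesis by simp
  qed
  ultimately have "((2::real)^?l)^2 / 16 \<le> (real_of_int (cen q (k $ c)))^2"
    by (simp add: power_mult_distrib)
  also have "\<dots> \<le> sqnorm (ksv q k)" unfolding sqnorm_def ksv_def vec_lambda_beta
    by (rule member_le_sum) auto
  finally show "((2::real) ^ lev q k)^2 / 16 \<le> sqnorm (ksv q k)" .
  have cb: "(real_of_int (cen q (k $ c')))^2 \<le> ((2::real)^?l)^2 / 4" for c'
    using inb_sq[of ?l "cen q (k $ c')"] lp(2) by simp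
  have "sqnorm (ksv q k) \<le> (\<Sum>c\<in>(UNIV::'d set). ((2::real)^?l)^2 / 4)"
    unfolding sqnorm_def ksv_def by (rule sum_mono) (subst vec_lambda_beta, rule cb)
  thus "sqnorm (ksv q k) \<le> real CARD('d) * ((2::real) ^ lev q k)^2 / 4" by simp
qed

lemma ek_bound:
  fixes k :: "int^'d::finite" and \<delta> t :: real
  assumes k: "k \<in> Jq q" "k \<noteq> 0" and \<delta>: "\<delta> > 0"
    and t1: "real CARD('d) / 2 + \<delta> \<le> t" and t2: "t \<le> 1 / \<delta>"
  shows "mu t q k > 0"
    "\<bar>ln (mu t q k) + 2 * t * real (lev q k) * ln 2\<bar> \<le>
       (1 / \<delta>) * (ln (4 * pi^2) + ln (real CARD('d)) + 4 * ln 2)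
       + ln (1 + real CARD('d) powr (1 / \<delta>) *
              infsum (\<lambda>n::int^'d. sqnorm n powr (- (real CARD('d) / 2 + \<delta>))) (UNIV - {0}))"
proof -
  let ?d = "real CARD('d)"
  define s0 where "s0 = ?d / 2 + \<delta>"
  define S0 where "S0 = infsum (\<lambda>n::int^'d. sqnorm n powr (- s0)) (UNIV - {0})"
  define A where "A = 1 + ?d powr (1 / \<delta>) * S0"
  define s where "s = sqnorm (ksv q k)"
  define L where "L = 2 * real (lev q k) * ln 2"
  have s0: "s0 > ?d / 2" using \<delta> by (simp add: s0_def)
  have ts0: "s0 \<le> t" using t1 by (simp add: s0_def)
  have tpos: "t > ?d / 2" using s0 ts0 by linarith
  have t0: "t \<ge> 0" using tpos by (smt (verit) divide_nonneg_nonneg of_nat_0_le_iff)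
  have S0: "S0 \<ge> 0" unfolding S0_def by (rule infsum_nonneg) simp
  have A1: "A \<ge> 1" unfolding A_def using S0 by simp
  have ks0: "ksv q k \<noteq> 0" by (rule ksv_nonzero[OF k])
  have ccpos: "cc t (ksv q k) > 0" by (rule cc_pos[OF ks0])
  have low: "cc t (ksv q k) \<le> mu t q k" by (rule mu_lower[OF k tpos])
  have up: "mu t q k \<le> cc t (ksv q k) * A"
    unfolding A_def S0_def by (rule mu_upper[OF k ts0 t2 s0])
  show mupos: "mu t q k > 0" using ccpos low by linarith
  have s1: "s \<ge> 1" unfolding s_def by (rule sqnorm_ge1[OF ks0])
  have lc: "ln (cc t (ksv q k)) = - (t * ln (4 * pi^2)) - t * ln s"
  proof -
    have "ln (cc t (ksv q k)) = - t * ln (4 * pi^2 * s)" by (simp add: cc_def s_def)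
    also have "ln (4 * pi^2 * s) = ln (4 * pi^2) + ln s" using s1 by (simp add: ln_mult)
    finally show ?thesis by (simp add: algebra_simps)
  qed
  have lm1: "ln (cc t (ksv q k)) \<le> ln (mu t q k)" using low ccpos mupos by simp
  have lm2: "ln (mu t q k) \<le> ln (cc t (ksv q k)) + ln A"
  proof -
    have "ln (mu t q k) \<le> ln (cc t (ksv q k) * A)" using up mupos by simp
    also have "\<dots> = ln (cc t (ksv q k)) + ln A" using ccpos A1 by (simp add: ln_mult)
    finally show ?thesis .
  qed
  have l2: "ln (((2::real) ^ lev q k)^2) = L" by (simp add: L_def ln_realpow)
  have sl: "L - 4 * ln 2 \<le> ln s"
  proof -
    have "ln (((2::real) ^ lev q k)^2 / 16) \<le> ln s"
      using ksv_sq_lev(1)[OF k] s1 by (simp add: s_def)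
    moreover have "ln (((2::real) ^ lev q k)^2 / 16) = L - 4 * ln 2"
    proof -
      have "ln (((2::real) ^ lev q k)^2 / 16) = ln (((2::real) ^ lev q k)^2) - ln 16"
        by (simp add: ln_div)
      moreover have "ln (16::real) = 4 * ln 2"
        using ln_realpow[of 2 4] by simp
      ultimately show ?thesis using l2 by simp
    qed
    ultimately show ?thesis by simp
  qed
  have su: "ln s \<le> ln ?d + L - 2 * ln 2"
  proof -
    have "ln s \<le> ln (?d * ((2::real) ^ lev q k)^2 / 4)"
      using ksv_sq_lev(2)[OF k] s1 by (simp add: s_def)
    moreover have "ln (?d * ((2::real) ^ lev q k)^2 / 4) = ln ?d + L - 2 * ln 2"
    proof -
      have "ln (?d * ((2::real) ^ lev q k)^2 / 4) = ln ?d + ln (((2::real) ^ lev q k)^2) - ln 4"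
        by (simp add: ln_div ln_mult)
      moreover have "ln (4::real) = 2 * ln 2"
        using ln_realpow[of 2 2] by simp
      ultimately show ?thesis using l2 by simp
    qed
    ultimately show ?thesis by simp
  qed
  have m1: "t * ln s \<le> t * ln ?d + t * L - 2 * (t * ln 2)"
    using mult_left_mono[OF su t0] by (simp add: algebra_simps)
  have m2: "t * L - 4 * (t * ln 2) \<le> t * ln s"
    using mult_left_mono[OF sl t0] by (simp add: algebra_simps)
  have a0: "ln (4 * pi^2) \<ge> 0"
  proof -
    have "(1::real) \<le> 4 * pi^2" using pi_gt3 by (smt (verit) power2_less_imp_less one_power2)
    thus ?thesis by simp
  qed
  have b0: "ln ?d \<ge> 0" by simp
  have lA0: "ln A \<ge> 0" using A1 by simp
  have ta: "t * ln (4 * pi^2) \<ge> 0" using t0 a0 by simp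
  have tb: "t * ln ?d \<ge> 0" using t0 b0 by simp
  have t2': "t * 0 \<le> t * ln 2" using t0 by (intro mult_left_mono) auto
  have eLd: "2 * t * real (lev q k) * ln 2 = t * L" by (simp add: L_def)
  have bnd: "\<bar>ln (mu t q k) + t * L\<bar> \<le> t * (ln (4 * pi^2) + ln ?d + 4 * ln 2) + ln A"
    using lc lm1 lm2 m1 m2 ta tb t2' lA0 by (simp add: algebra_simps abs_le_iff)
  have "t * (ln (4 * pi^2) + ln ?d + 4 * ln 2) \<le> (1 / \<delta>) * (ln (4 * pi^2) + ln ?d + 4 * ln 2)"
    using t2 a0 b0 by (intro mult_right_mono) auto
  with bnd show "\<bar>ln (mu t q k) + 2 * t * real (lev q k) * ln 2\<bar> \<le>
       (1 / \<delta>) * (ln (4 * pi^2) + ln (real CARD('d)) + 4 * ln 2)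
       + ln (1 + real CARD('d) powr (1 / \<delta>) *
              infsum (\<lambda>n::int^'d. sqnorm n powr (- (real CARD('d) / 2 + \<delta>))) (UNIV - {0}))"
    unfolding eLd A_def S0_def s0_def by linarith
qed


lemma S_pos:
  assumes t: "t > real CARD('d) / 2"
  shows "infsum (cc t) (UNIV - {0::int^'d::finite}) > 0"
proof -
  let ?v = "(\<chi> c. 1) :: int^'d"
  have v: "?v \<noteq> 0" by (simp add: Finite_Cartesian_Product.vec_eq_iff)
  have "cc t ?v = infsum (cc t) {?v}" by simp
  also have "\<dots> \<le> infsum (cc t) (UNIV - {0::int^'d})"
    by (rule infsum_mono2) (auto simp: summable_cc[OF t] cc_nonneg v)
  finally show ?thesis using cc_pos[OF v, of t] by linarith
qed

lemma mu0_pos: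
  assumes t: "t > real CARD('d) / 2"
  shows "mu t q (0::int^'d::finite) > 0"
  using S_pos[OF t] by (simp add: mu_zero[OF t])

lemma ln_mu0:
  assumes t: "t > real CARD('d) / 2"
  shows "ln (mu t q (0::int^'d::finite)) = - 2 * t * real q * ln 2 + ln (infsum (cc t) (UNIV - {0::int^'d}))"
proof -
  have "ln (mu t q (0::int^'d)) = ln ((2^q) powr (-2*t)) + ln (infsum (cc t) (UNIV - {0::int^'d}))"
    using S_pos[OF t] by (simp add: mu_zero[OF t] ln_mult)
  also have "ln ((2^q) powr (-2*t) :: real) = - 2 * t * real q * ln 2"
    by (simp add: ln_realpow)
  finally show ?thesis .
qed

lemma logdet_formula:
  assumes t: "t > real CARD('d) / 2"
    and pos: "\<And>k::int^'d::finite. k \<in> Jq q \<Longrightarrow> mu t q k > 0"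
  shows "logdetK TYPE('d) t q = 2 ^ (q * CARD('d)) * (real (q * CARD('d)) * ln 2)
     + ln (mu t q (0::int^'d)) + (\<Sum>k\<in>(Jq q :: (int^'d) set) - {0}. ln (mu t q k))"
proof -
  define N :: nat where "N = 2 ^ (q * CARD('d))"
  define R where "R = (2 ^ (q * CARD('d))) ^ N * (\<Prod>k\<in>(Jq q :: (int^'d) set). mu t q k)"
  have "det_on (Jq q :: (int^'d) set) (gram t q) = complex_of_real R"
    by (simp add: det_gram[OF t] R_def N_def)
  hence "logdetK TYPE('d) t q = ln R" by (simp add: logdetK_def)
  also have "ln R = ln ((2 ^ (q * CARD('d))) ^ N) + ln (\<Prod>k\<in>(Jq q :: (int^'d) set). mu t q k)"
  proof -
    have P: "(\<Prod>k\<in>(Jq q :: (int^'d) set). mu t q k) > 0" by (rule prod_pos) (use pos in auto)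
    show ?thesis unfolding R_def using P by (simp add: ln_mult)
  qed
  also have "ln ((2 ^ (q * CARD('d))) ^ N :: real) = 2 ^ (q * CARD('d)) * (real (q * CARD('d)) * ln 2)"
    by (simp add: ln_realpow N_def)
  also have "ln (\<Prod>k\<in>(Jq q :: (int^'d) set). mu t q k) = (\<Sum>k\<in>(Jq q :: (int^'d) set). ln (mu t q k))"
    using pos by (subst ln_prod) (auto simp: finite_Jq dest: less_imp_neq[symmetric])
  also have "\<dots> = ln (mu t q (0::int^'d)) + (\<Sum>k\<in>(Jq q :: (int^'d) set) - {0}. ln (mu t q k))"
    by (rule sum.remove) (auto simp: finite_Jq zero_Jq)
  finally show ?thesis by simp
qed

lemma lev_zero: "lev q (0::int^'d::finite) = 0"
  by (simp add: lev_def inb_def cen_def)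


lemma part2:
  "\<exists>C'::real. C' > 0 \<and> (\<forall>q::nat. q \<ge> 1 \<longrightarrow>
            real q * 2 ^ (q * CARD('d::finite)) / C' \<le> - g1 CARD('d) q
          \<and> - g1 CARD('d) q \<le> C' * (real q * 2 ^ (q * CARD('d))))"
proof (intro exI conjI allI impI)
  let ?d = "CARD('d)"
  have l2: "ln (2::real) > 0" by simp
  have l21: "ln (2::real) \<le> 1" using ln_le_minus_one[of 2] by simp
  show "2 / ln 2 > (0::real)" using l2 by simp
  fix q :: nat assume q: "q \<ge> 1"
  define N :: real where "N = 2 ^ (q * ?d)"
  define G :: real where "G = (\<Sum>j<q. 2 ^ (j * ?d))"
  have g1: "- g1 ?d q = ln 2 * (real q * N - G)" by (simp add: g1_alt N_def G_def)
  have d1: "?d \<ge> 1" by (simp add: Suc_leI)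
  have GN: "G \<le> N - 1" unfolding G_def N_def by (rule geo_le[OF d1])
  have G0: "G \<ge> 0" unfolding G_def by (simp add: sum_nonneg)
  have N2: "N \<ge> 2"
  proof -
    have "(2::real) ^ 1 \<le> 2 ^ (q * ?d)" using q d1 by (intro power_increasing) (auto simp: Suc_le_eq)
    thus ?thesis by (simp add: N_def)
  qed
  have key: "G \<le> real q * N / 2"
  proof (cases "q = 1")
    case True
    hence "G = 1" by (simp add: G_def)
    thus ?thesis using True N2 by simp
  next
    case False
    hence "real q \<ge> 2" using q by simp
    hence "2 * N \<le> real q * N" using N2 by (intro mult_right_mono) auto
    thus ?thesis using GN by simp
  qed
  have "real q * N / (2 / ln 2) = ln 2 * (real q * N / 2)" by simp
  also have "\<dots> \<le> ln 2 * (real q * N - G)"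
  proof (rule mult_left_mono)
    show "real q * N / 2 \<le> real q * N - G" using key by linarith
  qed (use l2 in simp)
  finally show "real q * 2 ^ (q * ?d) / (2 / ln 2) \<le> - g1 ?d q" using g1 by (simp add: N_def)
  have qN: "real q * N \<ge> 0" using N2 by simp
  have "ln 2 * (real q * N - G) \<le> ln 2 * (real q * N)" using G0 l2 by (intro mult_left_mono) auto
  also have "\<dots> \<le> (2 / ln 2) * (real q * N)"
  proof (rule mult_right_mono[OF _ qN])
    have "ln 2 * ln 2 \<le> 1 * (2::real)" using l2 l21 by (intro mult_mono) auto
    thus "ln 2 \<le> 2 / ln (2::real)" using l2 by (simp add: field_simps)
  qed
  finally show "- g1 ?d q \<le> 2 / ln 2 * (real q * 2 ^ (q * ?d))" using g1 by (simp add: N_def)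
qed

lemma part1:
  fixes \<delta> :: real
  assumes \<delta>: "\<delta> > 0"
  shows "\<exists>C::real. \<forall>t q. real CARD('d) / 2 + \<delta> \<le> t \<and> t \<le> 1 / \<delta> \<and> q \<ge> 1 \<longrightarrow>
            (2*t - real CARD('d)) * g1 CARD('d) q - C * g2 CARD('d) t q + logdetK TYPE('d::finite) t 0
              \<le> logdetK TYPE('d) t q
          \<and> logdetK TYPE('d) t q
              \<le> (2*t - real CARD('d)) * g1 CARD('d) q + C * g2 CARD('d) t q + logdetK TYPE('d) t 0"
proof -
  let ?d = "real CARD('d)"
  define S0 where "S0 = infsum (\<lambda>n::int^'d. sqnorm n powr (- (?d / 2 + \<delta>))) (UNIV - {0})"
  define B where "B = (1 / \<delta>) * (ln (4 * pi^2) + ln ?d + 4 * ln 2) + ln (1 + ?d powr (1 / \<delta>) * S0)"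
  define K where "K = ?d * ln 2 + 2 * ln 2 / \<delta> + B"
  have S00: "S0 \<ge> 0" unfolding S0_def by (rule infsum_nonneg) simp
  have a0: "ln (4 * pi^2) \<ge> 0"
  proof -
    have "(1::real) \<le> 4 * pi^2" using pi_gt3 by (smt (verit) power2_less_imp_less one_power2)
    thus ?thesis by simp
  qed
  have B0: "B \<ge> 0" unfolding B_def using a0 S00 \<delta> by (intro add_nonneg_nonneg mult_nonneg_nonneg) auto
  have K0: "K \<ge> 0" unfolding K_def using B0 \<delta> by simp
  show ?thesis
  proof (rule exI[of _ "K / (2 * \<delta>)"], intro allI impI)
    fix t :: real and q :: nat
    assume H: "?d / 2 + \<delta> \<le> t \<and> t \<le> 1 / \<delta> \<and> q \<ge> 1"
    hence t1: "?d / 2 + \<delta> \<le> t" and t2: "t \<le> 1 / \<delta>" and q1: "q \<ge> 1" by auto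
    have tpos: "t > ?d / 2" using t1 \<delta> by linarith
    have t0: "t \<ge> 0" using tpos by (smt (verit) divide_nonneg_nonneg of_nat_0_le_iff)
    have d1: "CARD('d) \<ge> 1" by (simp add: Suc_leI)
    define N :: real where "N = 2 ^ (q * CARD('d))"
    define G :: real where "G = (\<Sum>j<q. 2 ^ (j * CARD('d)))"
    define S where "S = infsum (cc t) (UNIV - {0::int^'d})"
    define e where "e k = ln (mu t q k) + 2 * t * real (lev q k) * ln 2" for k :: "int^'d"
    have pos: "mu t q k > 0" if "k \<in> Jq q" for k :: "int^'d"
    proof (cases "k = 0")
      case True thus ?thesis using mu0_pos[OF tpos] by simp
    next
      case False thus ?thesis using ek_bound(1)[OF that False \<delta> t1 t2] by simp
    qed
    have pos0: "mu t 0 k > 0" if "k \<in> Jq 0" for k :: "int^'d"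
      using that mu0_pos[OF tpos] by (simp add: Jq0)
    have LQ: "logdetK TYPE('d) t q = N * (real q * ?d * ln 2) + (- 2 * t * real q * ln 2 + ln S)
        + (\<Sum>k\<in>(Jq q :: (int^'d) set) - {0}. ln (mu t q k))"
      using logdet_formula[OF tpos pos] ln_mu0[OF tpos, of q] by (simp add: N_def S_def)
    have L0: "logdetK TYPE('d) t 0 = ln S"
      using logdet_formula[OF tpos pos0] ln_mu0[OF tpos, of 0] by (simp add: S_def Jq0)
    have SUM: "(\<Sum>k\<in>(Jq q :: (int^'d) set) - {0}. ln (mu t q k)) =
        (\<Sum>k\<in>(Jq q :: (int^'d) set) - {0}. e k) - 2 * t * ln 2 * (\<Sum>k\<in>(Jq q :: (int^'d) set) - {0}. real (lev q k))"
      by (simp add: e_def sum_subtractf sum.distrib sum_distrib_left algebra_simps)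
    have LEV: "(\<Sum>k\<in>(Jq q :: (int^'d) set) - {0}. real (lev q k)) = real q * N - G"
    proof -
      have "(\<Sum>k\<in>(Jq q :: (int^'d) set). real (lev q k)) = real (lev q (0::int^'d)) + (\<Sum>k\<in>(Jq q :: (int^'d) set) - {0}. real (lev q k))"
        by (rule sum.remove) (auto simp: finite_Jq zero_Jq)
      thus ?thesis using sum_lev[where 'd='d, of q] by (simp add: lev_zero N_def G_def)
    qed
    have cardJ: "real (card ((Jq q :: (int^'d) set) - {0})) = N - 1"
      by (simp add: card_Diff_singleton finite_Jq zero_Jq card_Jq N_def of_nat_diff)
    have EB: "\<bar>\<Sum>k\<in>(Jq q :: (int^'d) set) - {0}. e k\<bar> \<le> (N - 1) * B"
    proof -
      have "\<bar>\<Sum>k\<in>(Jq q :: (int^'d) set) - {0}. e k\<bar> \<le> (\<Sum>k\<in>(Jq q :: (int^'d) set) - {0}. \<bar>e k\<bar>)"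
        by (rule sum_abs)
      also have "\<dots> \<le> (\<Sum>k\<in>(Jq q :: (int^'d) set) - {0}. B)"
      proof (rule sum_mono)
        fix k :: "int^'d" assume "k \<in> Jq q - {0}"
        hence "k \<in> Jq q" "k \<noteq> 0" by auto
        from ek_bound(2)[OF this \<delta> t1 t2] show "\<bar>e k\<bar> \<le> B"
          by (simp add: e_def B_def S0_def)
      qed
      also have "\<dots> = (N - 1) * B" using cardJ by simp
      finally show ?thesis .
    qed
    have G1: "g1 CARD('d) q = - ln 2 * (real q * N - G)" by (simp add: g1_alt N_def G_def)
    have GN: "G \<le> N - 1" unfolding G_def N_def by (rule geo_le[OF d1])
    have G0: "G \<ge> 0" unfolding G_def by (simp add: sum_nonneg)
    have qN: "real q \<le> N - 1" unfolding N_def by (rule q_le[OF d1])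
    have g2: "g2 CARD('d) t q = (N - 1) * (2 * t - ?d)" by (simp add: g2_def N_def)
    define E where "E = logdetK TYPE('d) t q - logdetK TYPE('d) t 0 - (2*t - ?d) * g1 CARD('d) q"
    have Eeq: "E = ?d * ln 2 * G - 2 * t * real q * ln 2 + (\<Sum>k\<in>(Jq q :: (int^'d) set) - {0}. e k)"
      unfolding E_def LQ L0 SUM LEV G1 by (simp add: algebra_simps)
    have b1: "?d * ln 2 * G \<le> ?d * ln 2 * (N - 1)" using GN by (intro mult_left_mono) auto
    have b1': "?d * ln 2 * G \<ge> 0" using G0 by simp
    have b2: "t * real q \<le> (1 / \<delta>) * (N - 1)" using t2 qN t0 \<delta> by (intro mult_mono) auto
    have b2': "t * real q \<ge> 0" using t0 by simp
    have l2: "ln (2::real) > 0" by simp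
    have b3: "2 * t * real q * ln 2 \<le> 2 * ln 2 / \<delta> * (N - 1)"
    proof -
      have "(t * real q) * (2 * ln 2) \<le> ((1 / \<delta>) * (N - 1)) * (2 * ln 2)"
        using b2 l2 by (intro mult_right_mono) auto
      thus ?thesis by (simp add: algebra_simps)
    qed
    have b3': "2 * t * real q * ln 2 \<ge> 0" using t0 l2 by simp
    have Eabs: "\<bar>E\<bar> \<le> K * (N - 1)"
      using Eeq b1 b1' b3 b3' EB unfolding K_def by (simp add: algebra_simps abs_le_iff)
    have N1: "N - 1 \<ge> 0" using qN by simp
    have "K * (N - 1) = K / (2 * \<delta>) * ((N - 1) * (2 * \<delta>))" using \<delta> by (simp add: field_simps)
    also have "\<dots> \<le> K / (2 * \<delta>) * ((N - 1) * (2 * t - ?d))"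
      using K0 \<delta> N1 t1 by (intro mult_left_mono mult_left_mono) auto
    finally have KC: "K * (N - 1) \<le> K / (2 * \<delta>) * g2 CARD('d) t q" by (simp add: g2)
    show "(2*t - ?d) * g1 CARD('d) q - K / (2 * \<delta>) * g2 CARD('d) t q + logdetK TYPE('d) t 0
              \<le> logdetK TYPE('d) t q
          \<and> logdetK TYPE('d) t q
              \<le> (2*t - ?d) * g1 CARD('d) q + K / (2 * \<delta>) * g2 CARD('d) t q + logdetK TYPE('d) t 0"
      using Eabs KC unfolding E_def by (simp add: abs_le_iff)
  qed
qed


theorem proposition2p7:
  fixes \<delta> :: real
  assumes "\<delta> > 0"
  shows "(\<exists>C::real. \<forall>t q. real CARD('d) / 2 + \<delta> \<le> t \<and> t \<le> 1 / \<delta> \<and> q \<ge> 1 \<longrightarrow>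
            (2*t - real CARD('d)) * g1 CARD('d) q - C * g2 CARD('d) t q + logdetK TYPE('d::finite) t 0
              \<le> logdetK TYPE('d) t q
          \<and> logdetK TYPE('d) t q
              \<le> (2*t - real CARD('d)) * g1 CARD('d) q + C * g2 CARD('d) t q + logdetK TYPE('d) t 0)
       \<and> (\<exists>C'::real. C' > 0 \<and> (\<forall>q::nat. q \<ge> 1 \<longrightarrow>
            real q * 2 ^ (q * CARD('d)) / C' \<le> - g1 CARD('d) q
          \<and> - g1 CARD('d) q \<le> C' * (real q * 2 ^ (q * CARD('d)))))"
  by (rule conjI[OF part1[OF assms] part2])

end
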